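(* Let $\gamma,\kappa_1,\kappa_2\ge 0$, $c>0$ and $0<a_1<a_2$ with $\gamma>\kappa_2$, and consider the scalar state-dependent delay differential equation $$u'(t)=-\gamma u(t)-\kappa_1 u\bigl(t-a_1-cu(t)\bigr)-\kappa_2 u\bigl(t-a_2-cu(t)\bigr).$$ Define the linear difference operator $L$ by $$Lu(s)=-\gamma u(s)-\kappa_1u(s-a_1)-\kappa_2u(s-a_2),$$ so that $$L^2u(s)=-\gamma Lu(s)-\sum_{j=1}^2\kappa_jLu(s-a_j).$$ Then for solutions $u$ lying in the (local) center or unstable manifold of the steady state $u\equiv0$, the equation can be written as the constant-delay equation $$u'(t)=Lu(t)+\sum_{i=1}^2\kappa_i\,c\,u(t)\,Lu(t-a_i)+\sum_{i,j=1}^2\kappa_i\kappa_j\,c^2\,u(t)\,u(t-a_i)\,Lu(t-a_i-a_j)-\frac12\bigl(cu(t)\bigr)^2\sum_{i=1}^2\kappa_i\,L^2u(t-a_i)+\mathcal{R}(t),$$ where the remainder satisfies $\mathcal{R}(t)=\mathcal{O}(\|u\|_5^4)$ with $\|u\|_5=\sup_{\theta\in[-5a_2,0]}|u(\theta)|$.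
   Context: The equation is the two-delay model $u'(t)=-\gamma u(t)-\kappa_1u(\alpha_1(t,u(t)))-\kappa_2u(\alpha_2(t,u(t)))$ with $\alpha_i(t,u(t))=t-a_i-c_iu(t)$, taken here with $c_1=c_2=c$. Under $\gamma>\kappa_2$ the state-dependent delays are bounded and never become advanced. Solutions on the center or unstable manifold of $u\equiv0$ are those that can be extended backward in time for all negative times while remaining near $0$. The remainder estimate $\mathcal{O}(\|u\|_5^4)$ refers to small solutions, i.e. $u$ close to the steady state $0$. *)

theory Defs
  imports "HOL-Analysis.Analysis"
begin

definition Lop :: "real \<Rightarrow> real \<Rightarrow> real \<Rightarrow> real \<Rightarrow> real \<Rightarrow> (real \<Rightarrow> real) \<Rightarrow> real \<Rightarrow> real" where
  "Lop \<gamma> \<kappa>1 \<kappa>2 a1 a2 u s = - \<gamma> * u s - \<kappa>1 * u (s - a1) - \<kappa>2 * u (s - a2)"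

definition norm5 :: "real \<Rightarrow> (real \<Rightarrow> real) \<Rightarrow> real \<Rightarrow> real" where
  "norm5 a2 u t = (SUP \<theta>\<in>{-5 * a2..0}. \<bar>u (t + \<theta>)\<bar>)"

end

theory Submission
  imports Defs
begin

lemma taylor2:
  fixes f f1 f2 :: "real \<Rightarrow> real"
  assumes D: "\<And>z. \<bar>z - y\<bar> \<le> \<bar>h\<bar> \<Longrightarrow> (f has_real_derivative f1 z) (at z) \<and> (f1 has_real_derivative f2 z) (at z)"
  shows "\<exists>\<xi>. \<bar>\<xi> - y\<bar> \<le> \<bar>h\<bar> \<and> f (y - h) = f y - h * f1 y + h^2/2 * f2 \<xi>"
proof (cases "h = 0")
  case True then show ?thesis by (intro exI[of _ y]) auto
next
  case False
  define diff where "diff = (\<lambda>n::nat. if n = 0 then f else if n = 1 then f1 else f2)"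
  have "\<exists>t. (if y - h < y then y - h < t \<and> t < y else y < t \<and> t < y - h) \<and>
    f (y-h) = (\<Sum>m<2. (diff m y / fact m) * ((y-h) - y)^m) + (diff 2 t / fact 2) * ((y-h) - y)^2"
  proof (rule Taylor[where a="y - \<bar>h\<bar>" and b="y + \<bar>h\<bar>"])
    show "\<forall>m t. m < 2 \<and> y - \<bar>h\<bar> \<le> t \<and> t \<le> y + \<bar>h\<bar> \<longrightarrow> DERIV (diff m) t :> diff (Suc m) t"
    proof (intro allI impI)
      fix m :: nat and t assume a: "m < 2 \<and> y - \<bar>h\<bar> \<le> t \<and> t \<le> y + \<bar>h\<bar>"
      then have "\<bar>t - y\<bar> \<le> \<bar>h\<bar>" by auto
      from D[OF this] a show "DERIV (diff m) t :> diff (Suc m) t"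
        by (cases m) (auto simp: diff_def less_2_cases_iff)
    qed
  qed (use False in \<open>auto simp: diff_def\<close>)
  then obtain t where t: "(if y - h < y then y - h < t \<and> t < y else y < t \<and> t < y - h)"
    and e: "f (y-h) = (\<Sum>m<2. (diff m y / fact m) * ((y-h) - y)^m) + (diff 2 t / fact 2) * ((y-h) - y)^2"
    by blast
  have "\<bar>t - y\<bar> \<le> \<bar>h\<bar>" using t by (auto split: if_splits)
  moreover have "f (y - h) = f y - h * f1 y + h^2/2 * f2 t"
    using e by (simp add: diff_def numeral_2_eq_2 power2_eq_square)
  ultimately show ?thesis by blast
qed

lemma tri3:
  fixes g k m a b d :: real
  assumes "g \<ge> 0" "k \<ge> 0" "m \<ge> 0"
  shows "\<bar>g * a + k * b + m * d\<bar> \<le> g * \<bar>a\<bar> + k * \<bar>b\<bar> + m * \<bar>d\<bar>"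
proof -
  have "\<bar>g * a + k * b + m * d\<bar> \<le> \<bar>g * a\<bar> + \<bar>k * b\<bar> + \<bar>m * d\<bar>" by linarith
  also have "\<dots> = g * \<bar>a\<bar> + k * \<bar>b\<bar> + m * \<bar>d\<bar>" using assms by (simp add: abs_mult)
  finally show ?thesis .
qed

context
  fixes \<gamma> \<kappa>1 \<kappa>2 c a1 a2 \<delta> T t N :: real and u u' :: "real \<Rightarrow> real"
  assumes g0: "\<gamma> \<ge> 0" and k1: "\<kappa>1 \<ge> 0" and k2: "\<kappa>2 \<ge> 0" and c0: "c > 0"
    and a10: "0 < a1" and a12: "a1 < a2" and d0: "\<delta> > 0" and dsm: "c * \<delta> \<le> a1 / 4"
    and der: "\<forall>x\<le>T. (u has_real_derivative u' x) (at x within {..T})"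
    and eq: "\<forall>x\<le>T. u' x = - \<gamma> * u x - \<kappa>1 * u (x - a1 - c * u x) - \<kappa>2 * u (x - a2 - c * u x)"
    and bnd: "\<forall>x\<le>T. \<bar>u x\<bar> \<le> \<delta>"
    and tT: "t \<le> T"
    and Nb: "\<And>x. t - 5 * a2 \<le> x \<Longrightarrow> x \<le> t \<Longrightarrow> \<bar>u x\<bar> \<le> N"
    and Nd: "N \<le> \<delta>"
begin

abbreviation "Lu \<equiv> Lop \<gamma> \<kappa>1 \<kappa>2 a1 a2"
definition "K1 = \<gamma> + \<kappa>1 + \<kappa>2"
lemma K10: "K1 \<ge> 0" unfolding K1_def using g0 k1 k2 by simp

definition u2 :: "real \<Rightarrow> real" where
  "u2 x = - \<gamma> * u' x - \<kappa>1 * u' (x - a1 - c * u x) * (1 - c * u' x) - \<kappa>2 * u' (x - a2 - c * u x) * (1 - c * u' x)"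

lemma N0: "N \<ge> 0"
  using Nb[of t] a12 a10 by force

lemma cu: "x \<le> T \<Longrightarrow> \<bar>c * u x\<bar> \<le> c * \<delta>"
  using bnd c0 by (simp add: abs_mult)

lemma D1: "x < T \<Longrightarrow> (u has_real_derivative u' x) (at x)"
proof -
  assume "x < T"
  then have "x \<in> interior {..T}" by simp
  then have "at x within {..T} = at x" by (rule at_within_interior)
  moreover have "(u has_real_derivative u' x) (at x within {..T})" using der \<open>x < T\<close> by auto
  ultimately show ?thesis by simp
qed

lemma D2: "x < T \<Longrightarrow> (u' has_real_derivative u2 x) (at x)"
proof -
  assume xT: "x < T"
  have c1: "\<bar>c * u x\<bar> \<le> a1/4" using cu[of x] xT dsm by auto
  have y1: "x - a1 - c * u x < T" using c1 xT a10 by auto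
  have y2: "x - a2 - c * u x < T" using c1 xT a10 a12 by auto
  define g where "g = (\<lambda>x. - \<gamma> * u x - \<kappa>1 * u (x - a1 - c * u x) - \<kappa>2 * u (x - a2 - c * u x))"
  have du: "((\<lambda>x. x - a - c * u x) has_real_derivative 1 - c * u' x) (at x)" for a
    by (auto intro!: derivative_eq_intros D1 xT)
  have "(g has_real_derivative u2 x) (at x)"
    unfolding g_def u2_def
    apply (rule derivative_eq_intros D1[OF xT] DERIV_chain2[OF D1[OF y1] du] DERIV_chain2[OF D1[OF y2] du] | simp)+
    done
  then show ?thesis
    apply (rule has_field_derivative_transform_within_open[where S="{..<T}"])
    using xT eq by (auto simp: g_def)
qed

lemma eps: "c * \<delta> \<le> a2 / 4" using dsm a12 by linarith

lemma cuN: "t - 5 * a2 \<le> x \<Longrightarrow> x \<le> t \<Longrightarrow> \<bar>c * u x\<bar> \<le> c * N"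
  using Nb[of x] c0 by (simp add: abs_mult)

lemma P2: assumes "t - 15/4 * a2 \<le> x" "x \<le> t" shows "\<bar>u' x\<bar> \<le> K1 * N"
proof -
  have c1: "\<bar>c * u x\<bar> \<le> c * \<delta>" using cu[of x] assms tT by auto
  have e: "u' x = - \<gamma> * u x - \<kappa>1 * u (x - a1 - c * u x) - \<kappa>2 * u (x - a2 - c * u x)"
    using eq assms tT by auto
  have b0: "\<bar>u x\<bar> \<le> N" apply (rule Nb) using assms a12 a10 by linarith+
  have c2: "- (c * \<delta>) \<le> c * u x" "c * u x \<le> c * \<delta>" using c1 by linarith+
  have b1: "\<bar>u (x - a1 - c * u x)\<bar> \<le> N" apply (rule Nb) using c2 eps dsm assms a12 a10 by linarith+
  have b2: "\<bar>u (x - a2 - c * u x)\<bar> \<le> N" apply (rule Nb) using c2 eps dsm assms a12 a10 by linarith+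
  have "\<bar>u' x\<bar> = \<bar>\<gamma> * (- u x) + \<kappa>1 * (- u (x - a1 - c * u x)) + \<kappa>2 * (- u (x - a2 - c * u x))\<bar>"
    unfolding e by simp
  also have "\<dots> \<le> \<gamma> * \<bar>u x\<bar> + \<kappa>1 * \<bar>u (x - a1 - c * u x)\<bar> + \<kappa>2 * \<bar>u (x - a2 - c * u x)\<bar>"
    using tri3[OF g0 k1 k2, of "- u x" "- u (x - a1 - c * u x)" "- u (x - a2 - c * u x)"] by simp
  also have "\<dots> \<le> \<gamma> * N + \<kappa>1 * N + \<kappa>2 * N"
    by (intro add_mono mult_left_mono b0 b1 b2 g0 k1 k2)
  finally show ?thesis by (simp add: algebra_simps K1_def)
qed

lemma Lip: assumes "t - 15/4 * a2 \<le> p" "p \<le> t - a1/2" "t - 15/4 * a2 \<le> q" "q \<le> t - a1/2"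
  shows "\<bar>u p - u q\<bar> \<le> K1 * N * \<bar>p - q\<bar>"
proof -
  have gen: "\<bar>u b - u a\<bar> \<le> K1 * N * \<bar>b - a\<bar>" if ab: "a < b" "t - 15/4 * a2 \<le> a" "b \<le> t - a1/2" for a b
  proof -
    obtain z where z: "a < z" "z < b" "u b - u a = (b - a) * u' z"
      using MVT2[OF ab(1), of u u'] D1 ab tT a10 by force
    have "\<bar>u' z\<bar> \<le> K1 * N" using P2[of z] z ab a10 by auto
    moreover have "\<bar>b - a\<bar> \<ge> 0" by simp
    ultimately have "\<bar>b - a\<bar> * \<bar>u' z\<bar> \<le> \<bar>b - a\<bar> * (K1 * N)" by (rule mult_left_mono)
    then show ?thesis unfolding z(3) by (simp add: abs_mult mult.commute)
  qed
  show ?thesis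
  proof (cases p q rule: linorder_cases)
    case less then show ?thesis using gen[of p q] assms by (simp add: abs_minus_commute)
  next
    case greater then show ?thesis using gen[of q p] assms by simp
  qed simp
qed

lemma LuLip: assumes "t - 11/4 * a2 \<le> p" "p \<le> t - a1/2" "t - 11/4 * a2 \<le> q" "q \<le> t - a1/2"
  shows "\<bar>Lu u p - Lu u q\<bar> \<le> K1 * (K1 * N) * \<bar>p - q\<bar>"
proof -
  have l0: "\<bar>u p - u q\<bar> \<le> K1 * N * \<bar>p - q\<bar>" using Lip assms a12 a10 by auto
  have l1: "\<bar>u (p - a1) - u (q - a1)\<bar> \<le> K1 * N * \<bar>p - q\<bar>" using Lip[of "p - a1" "q - a1"] assms a12 a10 by auto
  have l2: "\<bar>u (p - a2) - u (q - a2)\<bar> \<le> K1 * N * \<bar>p - q\<bar>" using Lip[of "p - a2" "q - a2"] assms a12 a10 by auto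
  have "\<bar>Lu u p - Lu u q\<bar> = \<bar>\<gamma> * (u p - u q) + \<kappa>1 * (u (p - a1) - u (q - a1)) + \<kappa>2 * (u (p - a2) - u (q - a2))\<bar>"
    unfolding Lop_def by (simp add: algebra_simps)
  also have "\<dots> \<le> \<gamma> * \<bar>u p - u q\<bar> + \<kappa>1 * \<bar>u (p - a1) - u (q - a1)\<bar> + \<kappa>2 * \<bar>u (p - a2) - u (q - a2)\<bar>"
    by (rule tri3[OF g0 k1 k2])
  also have "\<dots> \<le> \<gamma> * (K1 * N * \<bar>p - q\<bar>) + \<kappa>1 * (K1 * N * \<bar>p - q\<bar>) + \<kappa>2 * (K1 * N * \<bar>p - q\<bar>)"
    by (intro add_mono mult_left_mono l0 l1 l2 g0 k1 k2)
  finally show ?thesis by (simp add: algebra_simps K1_def)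
qed

lemma L2Lip: assumes "t - 7/4 * a2 \<le> p" "p \<le> t - a1/2" "t - 7/4 * a2 \<le> q" "q \<le> t - a1/2"
  shows "\<bar>Lu (Lu u) p - Lu (Lu u) q\<bar> \<le> K1 * (K1 * (K1 * N)) * \<bar>p - q\<bar>"
proof -
  define M where "M = K1 * (K1 * N) * \<bar>p - q\<bar>"
  have l0: "\<bar>Lu u p - Lu u q\<bar> \<le> M" unfolding M_def using LuLip assms a12 a10 by auto
  have l1: "\<bar>Lu u (p - a1) - Lu u (q - a1)\<bar> \<le> M" unfolding M_def using LuLip[of "p - a1" "q - a1"] assms a12 a10 by auto
  have l2: "\<bar>Lu u (p - a2) - Lu u (q - a2)\<bar> \<le> M" unfolding M_def using LuLip[of "p - a2" "q - a2"] assms a12 a10 by auto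
  have "\<bar>Lu (Lu u) p - Lu (Lu u) q\<bar> = \<bar>\<gamma> * (Lu u p - Lu u q) + \<kappa>1 * (Lu u (p - a1) - Lu u (q - a1)) + \<kappa>2 * (Lu u (p - a2) - Lu u (q - a2))\<bar>"
    unfolding Lop_def[of _ _ _ _ _ "Lu u"] by (simp add: algebra_simps)
  also have "\<dots> \<le> \<gamma> * \<bar>Lu u p - Lu u q\<bar> + \<kappa>1 * \<bar>Lu u (p - a1) - Lu u (q - a1)\<bar> + \<kappa>2 * \<bar>Lu u (p - a2) - Lu u (q - a2)\<bar>"
    by (rule tri3[OF g0 k1 k2])
  also have "\<dots> \<le> \<gamma> * M + \<kappa>1 * M + \<kappa>2 * M"
    by (intro add_mono mult_left_mono l0 l1 l2 g0 k1 k2)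
  finally show ?thesis by (simp add: algebra_simps M_def K1_def)
qed

definition "KB = (\<kappa>1 + \<kappa>2) * K1 * c"
definition "K2 = \<gamma> * K1 + (\<kappa>1 + \<kappa>2) * K1 * (1 + c * K1 * \<delta>)"
definition "KC = \<gamma> * KB + (\<kappa>1 + \<kappa>2) * (KB + K1 * K1 * c + c * K1 * K1)"

lemma KB0: "KB \<ge> 0" unfolding KB_def using k1 k2 K10 c0 by simp
lemma K20: "K2 \<ge> 0" unfolding K2_def using g0 k1 k2 K10 c0 d0 by simp
lemma KC0: "KC \<ge> 0" unfolding KC_def using g0 k1 k2 K10 c0 KB0 by simp

lemma cux: assumes "t - 5 * a2 \<le> x" "x \<le> t" shows "- (c * N) \<le> c * u x" "c * u x \<le> c * N" "c * N \<le> c * \<delta>"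
  using cuN[OF assms] Nd c0 by (auto simp: abs_le_iff)

lemma Lipj: assumes "t - 15/4 * a2 \<le> y - h" "y - h \<le> t - a1/2" "t - 15/4 * a2 \<le> y" "y \<le> t - a1/2"
   "\<bar>h\<bar> \<le> c * N"
  shows "\<bar>u (y - h) - u y\<bar> \<le> K1 * N * (c * N)"
proof -
  have "\<bar>u (y - h) - u y\<bar> \<le> K1 * N * \<bar>(y - h) - y\<bar>" by (rule Lip) (use assms in auto)
  also have "\<dots> \<le> K1 * N * (c * N)" using assms(5) K10 N0 by (simp add: mult_left_mono)
  finally show ?thesis .
qed

lemma B: assumes "t - 5/2 * a2 \<le> x" "x \<le> t" shows "\<bar>u' x - Lu u x\<bar> \<le> KB * N^2"
proof -
  note cx = cux[of x]
  have cx1: "- (c * N) \<le> c * u x" "c * u x \<le> c * N" "c * N \<le> c * \<delta>" using cx assms a12 a10 by auto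
  have e: "u' x = - \<gamma> * u x - \<kappa>1 * u (x - a1 - c * u x) - \<kappa>2 * u (x - a2 - c * u x)"
    using eq assms tT by auto
  have h: "\<bar>c * u x\<bar> \<le> c * N" using cx1 by auto
  have l1: "\<bar>u (x - a1 - c * u x) - u (x - a1)\<bar> \<le> K1 * N * (c * N)"
    using Lipj[of "x - a1" "c * u x"] h cx1 assms eps dsm a12 a10 by (auto simp: algebra_simps)
  have l2: "\<bar>u (x - a2 - c * u x) - u (x - a2)\<bar> \<le> K1 * N * (c * N)"
    using Lipj[of "x - a2" "c * u x"] h cx1 assms eps dsm a12 a10 by (auto simp: algebra_simps)
  have "\<bar>u' x - Lu u x\<bar> = \<bar>0 * 0 + \<kappa>1 * (- (u (x - a1 - c * u x) - u (x - a1))) + \<kappa>2 * (- (u (x - a2 - c * u x) - u (x - a2)))\<bar>"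
    unfolding e Lop_def by (simp add: algebra_simps)
  also have "\<dots> \<le> 0 * \<bar>0\<bar> + \<kappa>1 * \<bar>u (x - a1 - c * u x) - u (x - a1)\<bar> + \<kappa>2 * \<bar>u (x - a2 - c * u x) - u (x - a2)\<bar>"
    using tri3[of 0 \<kappa>1 \<kappa>2 0 "- (u (x - a1 - c * u x) - u (x - a1))" "- (u (x - a2 - c * u x) - u (x - a2))"] k1 k2 by (simp add: abs_minus_commute)
  also have "\<dots> \<le> 0 * 0 + \<kappa>1 * (K1 * N * (c * N)) + \<kappa>2 * (K1 * N * (c * N))"
    by (intro add_mono mult_left_mono l1 l2 k1 k2) auto
  finally show ?thesis by (simp add: KB_def algebra_simps power2_eq_square)
qed

lemma P3: assumes "t - 5/2 * a2 \<le> x" "x \<le> t" shows "\<bar>u2 x\<bar> \<le> K2 * N"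
proof -
  have cx1: "- (c * N) \<le> c * u x" "c * u x \<le> c * N" "c * N \<le> c * \<delta>" using cux[of x] assms a12 a10 by auto
  have ux: "\<bar>u' x\<bar> \<le> K1 * N" using P2 assms a12 a10 by auto
  have w: "\<bar>1 - c * u' x\<bar> \<le> 1 + c * K1 * \<delta>"
  proof -
    have "\<bar>c * u' x\<bar> \<le> c * (K1 * N)" using ux c0 by (simp add: abs_mult)
    also have "\<dots> \<le> c * (K1 * \<delta>)" using Nd K10 c0 by (simp add: mult_left_mono)
    finally show ?thesis by (simp add: algebra_simps)
  qed
  have w0: "0 \<le> 1 + c * K1 * \<delta>" using c0 K10 d0 by simp
  have y1: "\<bar>u' (x - a1 - c * u x)\<bar> \<le> K1 * N" apply (rule P2) using cx1 assms eps dsm a12 a10 by linarith+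
  have y2: "\<bar>u' (x - a2 - c * u x)\<bar> \<le> K1 * N" apply (rule P2) using cx1 assms eps dsm a12 a10 by linarith+
  have m1: "\<bar>u' (x - a1 - c * u x) * (1 - c * u' x)\<bar> \<le> K1 * N * (1 + c * K1 * \<delta>)"
    unfolding abs_mult by (rule mult_mono[OF y1 w]) (use K10 N0 in auto)
  have m2: "\<bar>u' (x - a2 - c * u x) * (1 - c * u' x)\<bar> \<le> K1 * N * (1 + c * K1 * \<delta>)"
    unfolding abs_mult by (rule mult_mono[OF y2 w]) (use K10 N0 in auto)
  have "\<bar>u2 x\<bar> = \<bar>\<gamma> * (- u' x) + \<kappa>1 * (- (u' (x - a1 - c * u x) * (1 - c * u' x))) + \<kappa>2 * (- (u' (x - a2 - c * u x) * (1 - c * u' x)))\<bar>"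
    unfolding u2_def by (simp add: algebra_simps)
  also have "\<dots> \<le> \<gamma> * \<bar>u' x\<bar> + \<kappa>1 * \<bar>u' (x - a1 - c * u x) * (1 - c * u' x)\<bar> + \<kappa>2 * \<bar>u' (x - a2 - c * u x) * (1 - c * u' x)\<bar>"
    using tri3[OF g0 k1 k2, of "- u' x" "- (u' (x - a1 - c * u x) * (1 - c * u' x))" "- (u' (x - a2 - c * u x) * (1 - c * u' x))"] by simp
  also have "\<dots> \<le> \<gamma> * (K1 * N) + \<kappa>1 * (K1 * N * (1 + c * K1 * \<delta>)) + \<kappa>2 * (K1 * N * (1 + c * K1 * \<delta>))"
    by (intro add_mono mult_left_mono ux m1 m2 g0 k1 k2)
  finally show ?thesis by (simp add: K2_def algebra_simps)
qed

lemma Cj: assumes "t - 5/4 * a2 \<le> x" "x \<le> t - a1/2" and aj: "aj = a1 \<or> aj = a2"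
  shows "\<bar>(u' (x - aj - c * u x) - Lu u (x - aj - c * u x)) + (Lu u (x - aj - c * u x) - Lu u (x - aj))
          - c * u' x * u' (x - aj - c * u x)\<bar> \<le> KB * N^2 + K1 * K1 * c * N^2 + c * K1 * K1 * N^2"
proof -
  have cx1: "- (c * N) \<le> c * u x" "c * u x \<le> c * N" "c * N \<le> c * \<delta>" using cux[of x] assms a12 a10 by auto
  have ajb: "a1 \<le> aj" "aj \<le> a2" using aj a12 by auto
  define y where "y = x - aj - c * u x"
  have yb: "t - 5/2 * a2 \<le> y" "y \<le> x - a1 + a1/4" unfolding y_def using cx1 ajb assms eps dsm by linarith+
  have b1: "\<bar>u' y - Lu u y\<bar> \<le> KB * N^2" apply (rule B) using yb assms a10 by linarith+
  have b2: "\<bar>Lu u y - Lu u (x - aj)\<bar> \<le> K1 * (K1 * N) * \<bar>y - (x - aj)\<bar>"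
    apply (rule LuLip) using yb assms a10 ajb a12 by linarith+
  have b2': "K1 * (K1 * N) * \<bar>y - (x - aj)\<bar> \<le> K1 * (K1 * N) * (c * N)"
    apply (rule mult_left_mono) unfolding y_def using cx1 K10 N0 by auto
  have p1: "\<bar>u' x\<bar> \<le> K1 * N" using P2 assms a12 a10 by auto
  have p2: "\<bar>u' y\<bar> \<le> K1 * N" apply (rule P2) using yb assms a12 a10 by linarith+
  have b3: "\<bar>c * u' x * u' y\<bar> \<le> c * (K1 * N) * (K1 * N)"
    unfolding abs_mult using c0 by (intro mult_mono p1 p2) (use K10 N0 in auto)
  have "\<bar>(u' y - Lu u y) + (Lu u y - Lu u (x - aj)) - c * u' x * u' y\<bar> \<le>
     \<bar>u' y - Lu u y\<bar> + \<bar>Lu u y - Lu u (x - aj)\<bar> + \<bar>c * u' x * u' y\<bar>" by linarith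
  also have "\<dots> \<le> KB * N^2 + K1 * (K1 * N) * (c * N) + c * (K1 * N) * (K1 * N)"
    using b1 b2 b2' b3 by linarith
  finally show ?thesis unfolding y_def by (simp add: algebra_simps power2_eq_square)
qed

lemma C: assumes "t - 5/4 * a2 \<le> x" "x \<le> t - a1/2" shows "\<bar>u2 x - Lu (Lu u) x\<bar> \<le> KC * N^2"
proof -
  define M where "M = KB * N^2 + K1 * K1 * c * N^2 + c * K1 * K1 * N^2"
  define D where "D = (\<lambda>aj. (u' (x - aj - c * u x) - Lu u (x - aj - c * u x)) + (Lu u (x - aj - c * u x) - Lu u (x - aj))
          - c * u' x * u' (x - aj - c * u x))"
  have d1: "\<bar>D a1\<bar> \<le> M" unfolding D_def M_def by (rule Cj[OF assms]) simp
  have d2: "\<bar>D a2\<bar> \<le> M" unfolding D_def M_def by (rule Cj[OF assms]) simp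
  have b: "\<bar>u' x - Lu u x\<bar> \<le> KB * N^2" apply (rule B) using assms a12 a10 by linarith+
  have "\<bar>u2 x - Lu (Lu u) x\<bar> = \<bar>\<gamma> * (- (u' x - Lu u x)) + \<kappa>1 * (- D a1) + \<kappa>2 * (- D a2)\<bar>"
    unfolding u2_def D_def Lop_def[of _ _ _ _ _ "Lu u"] by (simp add: algebra_simps)
  also have "\<dots> \<le> \<gamma> * \<bar>u' x - Lu u x\<bar> + \<kappa>1 * \<bar>D a1\<bar> + \<kappa>2 * \<bar>D a2\<bar>"
    using tri3[OF g0 k1 k2, of "- (u' x - Lu u x)" "- D a1" "- D a2"] by (simp add: abs_minus_commute)
  also have "\<dots> \<le> \<gamma> * (KB * N^2) + \<kappa>1 * M + \<kappa>2 * M"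
    by (intro add_mono mult_left_mono b d1 d2 g0 k1 k2)
  finally show ?thesis by (simp add: KC_def M_def algebra_simps)
qed

definition "KE = KC + K1 * (K1 * (K1 * c))"
definition "KF = (\<kappa>1 + \<kappa>2) * (c * KB + c^2 / 2 * K2)"
definition "CG = c * KF + c^2 / 2 * KE"

lemma KE0: "KE \<ge> 0" unfolding KE_def using KC0 K10 c0 by simp
lemma KF0: "KF \<ge> 0" unfolding KF_def using KB0 K20 k1 k2 c0 by simp

lemma outer: assumes ai: "a1 \<le> ai" "ai \<le> a2"
  shows "\<exists>E. u (t - ai - c * u t) = u (t - ai) - c * u t * u' (t - ai) + (c * u t)^2 / 2 * (Lu (Lu u) (t - ai) + E)
     \<and> \<bar>E\<bar> \<le> KE * N^2"
proof -
  define s where "s = t - ai"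
  define h where "h = c * u t"
  have hb: "\<bar>h\<bar> \<le> c * N" "c * N \<le> c * \<delta>" unfolding h_def using cux[of t] a12 a10 by auto
  have "\<exists>\<xi>. \<bar>\<xi> - s\<bar> \<le> \<bar>h\<bar> \<and> u (s - h) = u s - h * u' s + h^2/2 * u2 \<xi>"
  proof (rule taylor2)
    fix z assume "\<bar>z - s\<bar> \<le> \<bar>h\<bar>"
    then have "z < T" using hb s_def ai tT dsm a10 by (auto simp: abs_le_iff)
    then show "(u has_real_derivative u' z) (at z) \<and> (u' has_real_derivative u2 z) (at z)"
      using D1 D2 by auto
  qed
  then obtain \<xi> where xi: "\<bar>\<xi> - s\<bar> \<le> \<bar>h\<bar>" "u (s - h) = u s - h * u' s + h^2/2 * u2 \<xi>" by blast
  have xib: "s - c * N \<le> \<xi>" "\<xi> \<le> s + c * N" using xi(1) hb by (auto simp: abs_le_iff)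
  have c1: "\<bar>u2 \<xi> - Lu (Lu u) \<xi>\<bar> \<le> KC * N^2"
    apply (rule C) using xib hb s_def ai eps dsm a10 a12 by linarith+
  have c2: "\<bar>Lu (Lu u) \<xi> - Lu (Lu u) s\<bar> \<le> K1 * (K1 * (K1 * N)) * \<bar>\<xi> - s\<bar>"
    apply (rule L2Lip) using xib hb s_def ai eps dsm a10 a12 by linarith+
  have c3: "K1 * (K1 * (K1 * N)) * \<bar>\<xi> - s\<bar> \<le> K1 * (K1 * (K1 * N)) * (c * N)"
    apply (rule mult_left_mono) using xi(1) hb K10 N0 by auto
  define E where "E = u2 \<xi> - Lu (Lu u) s"
  have "\<bar>E\<bar> \<le> KC * N^2 + K1 * (K1 * (K1 * N)) * (c * N)" unfolding E_def using c1 c2 c3 by linarith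
  then have "\<bar>E\<bar> \<le> KE * N^2" by (simp add: KE_def algebra_simps power2_eq_square)
  moreover have "u (t - ai - c * u t) = u (t - ai) - c * u t * u' (t - ai) + (c * u t)^2 / 2 * (Lu (Lu u) (t - ai) + E)"
    using xi(2) unfolding E_def s_def h_def by (simp add: algebra_simps)
  ultimately show ?thesis by blast
qed

lemma innerj: assumes "t - 2 * a2 \<le> y" "y \<le> t - 2 * a1" and hb: "\<bar>h\<bar> \<le> c * N"
  shows "\<bar>u (y - h) - (u y - h * Lu u y)\<bar> \<le> (c * KB + c^2 / 2 * K2) * N^3"
proof -
  have hb2: "c * N \<le> c * \<delta>" using Nd c0 by simp
  have "\<exists>\<xi>. \<bar>\<xi> - y\<bar> \<le> \<bar>h\<bar> \<and> u (y - h) = u y - h * u' y + h^2/2 * u2 \<xi>"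
  proof (rule taylor2)
    fix z assume "\<bar>z - y\<bar> \<le> \<bar>h\<bar>"
    then have "z < T" using hb hb2 assms tT dsm a10 by (auto simp: abs_le_iff)
    then show "(u has_real_derivative u' z) (at z) \<and> (u' has_real_derivative u2 z) (at z)"
      using D1 D2 by auto
  qed
  then obtain \<xi> where xi: "\<bar>\<xi> - y\<bar> \<le> \<bar>h\<bar>" "u (y - h) = u y - h * u' y + h^2/2 * u2 \<xi>" by blast
  have xib: "y - c * N \<le> \<xi>" "\<xi> \<le> y + c * N" using xi(1) hb by (auto simp: abs_le_iff)
  have p: "\<bar>u2 \<xi>\<bar> \<le> K2 * N" apply (rule P3) using xib hb2 assms eps dsm a10 a12 by linarith+
  have b: "\<bar>u' y - Lu u y\<bar> \<le> KB * N^2" apply (rule B) using assms a10 a12 by linarith+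
  have h2: "h^2 \<le> (c * N)^2" using hb by (metis abs_ge_zero power2_abs power_mono)
  have e: "u (y - h) - (u y - h * Lu u y) = - (h * (u' y - Lu u y)) + h^2/2 * u2 \<xi>"
    using xi(2) by (simp add: algebra_simps)
  have t1: "\<bar>h * (u' y - Lu u y)\<bar> \<le> (c * N) * (KB * N^2)"
    unfolding abs_mult by (intro mult_mono hb b) (use c0 N0 in auto)
  have t2: "\<bar>h^2/2 * u2 \<xi>\<bar> \<le> (c * N)^2 / 2 * (K2 * N)"
    unfolding abs_mult by (intro mult_mono p) (use h2 in auto)
  have "\<bar>u (y - h) - (u y - h * Lu u y)\<bar> \<le> (c * N) * (KB * N^2) + (c * N)^2 / 2 * (K2 * N)"
    unfolding e using t1 t2 by linarith
  then show ?thesis by (simp add: algebra_simps power2_eq_square power3_eq_cube)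
qed

lemma Gi: assumes ai: "a1 \<le> ai" "ai \<le> a2"
  shows "\<bar>u (t - ai - c * u t) - (u (t - ai) - c * u t * Lu u (t - ai)
      - c * u t * (c * u (t - ai)) * (\<kappa>1 * Lu u (t - ai - a1) + \<kappa>2 * Lu u (t - ai - a2))
      + (c * u t)^2 / 2 * Lu (Lu u) (t - ai))\<bar> \<le> CG * N^4"
proof -
  define s where "s = t - ai"
  define h where "h = c * u t"
  define h' where "h' = c * u s"
  obtain E where E: "u (s - h) = u s - h * u' s + h^2 / 2 * (Lu (Lu u) s + E)" "\<bar>E\<bar> \<le> KE * N^2"
    using outer[OF ai] unfolding s_def h_def by (auto simp: algebra_simps)
  have hb: "\<bar>h\<bar> \<le> c * N" unfolding h_def using cux[of t] a12 a10 by auto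
  have hb': "\<bar>h'\<bar> \<le> c * N" unfolding h'_def s_def using cux[of "t - ai"] ai a12 a10 by auto
  define KI where "KI = c * KB + c^2 / 2 * K2"
  define I where "I = (\<lambda>aj. u (s - aj - h') - (u (s - aj) - h' * Lu u (s - aj)))"
  have I1: "\<bar>I a1\<bar> \<le> KI * N^3" unfolding I_def KI_def
    using innerj[of "s - a1" h'] hb' s_def ai a12 a10 by (auto simp: algebra_simps)
  have I2: "\<bar>I a2\<bar> \<le> KI * N^3" unfolding I_def KI_def
    using innerj[of "s - a2" h'] hb' s_def ai a12 a10 by (auto simp: algebra_simps)
  have es: "u' s = - \<gamma> * u s - \<kappa>1 * u (s - a1 - h') - \<kappa>2 * u (s - a2 - h')"
    using eq s_def ai tT a10 a12 unfolding h'_def by auto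
  define F where "F = - \<kappa>1 * I a1 - \<kappa>2 * I a2"
  have uF: "u' s = Lu u s + h' * (\<kappa>1 * Lu u (s - a1) + \<kappa>2 * Lu u (s - a2)) + F"
    unfolding es F_def I_def Lop_def by (simp add: algebra_simps)
  have Fb: "\<bar>F\<bar> \<le> KF * N^3"
  proof -
    have "\<bar>F\<bar> \<le> 0 * \<bar>0\<bar> + \<kappa>1 * \<bar>I a1\<bar> + \<kappa>2 * \<bar>I a2\<bar>"
      using tri3[of 0 \<kappa>1 \<kappa>2 0 "- I a1" "- I a2"] k1 k2 unfolding F_def by simp
    also have "\<dots> \<le> 0 * 0 + \<kappa>1 * (KI * N^3) + \<kappa>2 * (KI * N^3)"
      by (intro add_mono mult_left_mono I1 I2 k1 k2) auto
    also have "\<dots> = KF * N^3" by (simp add: KF_def KI_def algebra_simps add_divide_distrib)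
    finally show ?thesis .
  qed
  have diff: "u (s - h) - (u s - h * Lu u s - h * h' * (\<kappa>1 * Lu u (s - a1) + \<kappa>2 * Lu u (s - a2))
      + h^2 / 2 * Lu (Lu u) s) = - (h * F) + h^2/2 * E"
    unfolding E(1) uF by (simp add: algebra_simps)
  have h2: "h^2 \<le> (c * N)^2" using hb by (metis abs_ge_zero power2_abs power_mono)
  have t1: "\<bar>h * F\<bar> \<le> (c * N) * (KF * N^3)"
    unfolding abs_mult by (intro mult_mono hb Fb) (use c0 N0 in auto)
  have t2: "\<bar>h^2/2 * E\<bar> \<le> (c * N)^2 / 2 * (KE * N^2)"
    unfolding abs_mult by (intro mult_mono E(2)) (use h2 in auto)
  have "\<bar>- (h * F) + h^2/2 * E\<bar> \<le> (c * N) * (KF * N^3) + (c * N)^2 / 2 * (KE * N^2)"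
    using t1 t2 by linarith
  also have "\<dots> = CG * N^4" by (simp add: CG_def algebra_simps power2_eq_square power3_eq_cube power4_eq_xxxx)
  finally show ?thesis using diff unfolding s_def h_def h'_def by (simp add: algebra_simps)
qed

lemma final:
  "\<bar>u' t -
          ( Lu u t
          + (\<Sum>i\<in>{1::nat,2}. (if i = 1 then \<kappa>1 else \<kappa>2) * c * u t
                 * Lu u (t - (if i = 1 then a1 else a2)))
          + (\<Sum>i\<in>{1::nat,2}. \<Sum>j\<in>{1::nat,2}.
                 (if i = 1 then \<kappa>1 else \<kappa>2) * (if j = 1 then \<kappa>1 else \<kappa>2) * c^2
                 * u t * u (t - (if i = 1 then a1 else a2))
                 * Lu u (t - (if i = 1 then a1 else a2) - (if j = 1 then a1 else a2)))
          - (1/2) * (c * u t)^2 * (\<Sum>i\<in>{1::nat,2}. (if i = 1 then \<kappa>1 else \<kappa>2)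
                 * Lu (Lu u) (t - (if i = 1 then a1 else a2)))
          )\<bar> \<le> ((\<kappa>1 + \<kappa>2) * CG) * N^4"
proof -
  define G where "G = (\<lambda>ai. u (t - ai - c * u t) - (u (t - ai) - c * u t * Lu u (t - ai)
      - c * u t * (c * u (t - ai)) * (\<kappa>1 * Lu u (t - ai - a1) + \<kappa>2 * Lu u (t - ai - a2))
      + (c * u t)^2 / 2 * Lu (Lu u) (t - ai)))"
  have g1: "\<bar>G a1\<bar> \<le> CG * N^4" unfolding G_def by (rule Gi) (use a12 in auto)
  have g2: "\<bar>G a2\<bar> \<le> CG * N^4" unfolding G_def by (rule Gi) (use a12 in auto)
  have e: "u' t = - \<gamma> * u t - \<kappa>1 * u (t - a1 - c * u t) - \<kappa>2 * u (t - a2 - c * u t)"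
    using eq tT by auto
  have "u' t -
          ( Lu u t
          + (\<Sum>i\<in>{1::nat,2}. (if i = 1 then \<kappa>1 else \<kappa>2) * c * u t
                 * Lu u (t - (if i = 1 then a1 else a2)))
          + (\<Sum>i\<in>{1::nat,2}. \<Sum>j\<in>{1::nat,2}.
                 (if i = 1 then \<kappa>1 else \<kappa>2) * (if j = 1 then \<kappa>1 else \<kappa>2) * c^2
                 * u t * u (t - (if i = 1 then a1 else a2))
                 * Lu u (t - (if i = 1 then a1 else a2) - (if j = 1 then a1 else a2)))
          - (1/2) * (c * u t)^2 * (\<Sum>i\<in>{1::nat,2}. (if i = 1 then \<kappa>1 else \<kappa>2)
                 * Lu (Lu u) (t - (if i = 1 then a1 else a2)))
          ) = 0 * 0 + \<kappa>1 * (- G a1) + \<kappa>2 * (- G a2)"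
    unfolding e G_def by (simp add: Lop_def[of _ _ _ _ _ u] algebra_simps power2_eq_square)
  moreover have "\<bar>0 * 0 + \<kappa>1 * (- G a1) + \<kappa>2 * (- G a2)\<bar> \<le> 0 * \<bar>0\<bar> + \<kappa>1 * \<bar>- G a1\<bar> + \<kappa>2 * \<bar>- G a2\<bar>"
    by (rule tri3) (use k1 k2 in auto)
  moreover have "0 * \<bar>0\<bar> + \<kappa>1 * \<bar>- G a1\<bar> + \<kappa>2 * \<bar>- G a2\<bar> \<le> 0 * 0 + \<kappa>1 * (CG * N^4) + \<kappa>2 * (CG * N^4)"
    using g1 g2 by (intro add_mono mult_left_mono k1 k2) auto
  ultimately show ?thesis by (simp add: algebra_simps)
qed

end

theorem theorem2p1:
  fixes \<gamma> \<kappa>1 \<kappa>2 c a1 a2 :: real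
  assumes "\<gamma> \<ge> 0" and "\<kappa>1 \<ge> 0" and "\<kappa>2 \<ge> 0" and "c > 0"
    and "0 < a1" and "a1 < a2" and "\<gamma> > \<kappa>2"
  defines "L \<equiv> Lop \<gamma> \<kappa>1 \<kappa>2 a1 a2"
  shows "\<exists>\<delta>>0. \<exists>C\<ge>0. \<forall>(u::real \<Rightarrow> real) (u'::real \<Rightarrow> real) (T::real).
     (\<forall>t\<le>T. (u has_real_derivative u' t) (at t within {..T})) \<longrightarrow>
     (\<forall>t\<le>T. u' t = - \<gamma> * u t - \<kappa>1 * u (t - a1 - c * u t) - \<kappa>2 * u (t - a2 - c * u t)) \<longrightarrow>
     (\<forall>t\<le>T. \<bar>u t\<bar> \<le> \<delta>) \<longrightarrow>
     (\<forall>t\<le>T.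
        \<bar>u' t -
          ( L u t
          + (\<Sum>i\<in>{1::nat,2}. (if i = 1 then \<kappa>1 else \<kappa>2) * c * u t
                 * L u (t - (if i = 1 then a1 else a2)))
          + (\<Sum>i\<in>{1::nat,2}. \<Sum>j\<in>{1::nat,2}.
                 (if i = 1 then \<kappa>1 else \<kappa>2) * (if j = 1 then \<kappa>1 else \<kappa>2) * c^2
                 * u t * u (t - (if i = 1 then a1 else a2))
                 * L u (t - (if i = 1 then a1 else a2) - (if j = 1 then a1 else a2)))
          - (1/2) * (c * u t)^2 * (\<Sum>i\<in>{1::nat,2}. (if i = 1 then \<kappa>1 else \<kappa>2)
                 * L (L u) (t - (if i = 1 then a1 else a2)))
          )\<bar> \<le> C * (norm5 a2 u t)^4)"
proof -
  define \<delta> where "\<delta> = a1 / (4 * c)"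
  have d0: "\<delta> > 0" unfolding \<delta>_def using assms by simp
  have dsm: "c * \<delta> \<le> a1 / 4" unfolding \<delta>_def using assms by simp
  define C where "C = max 0 ((\<kappa>1 + \<kappa>2) * CG \<gamma> \<kappa>1 \<kappa>2 c \<delta>)"
  have C0: "C \<ge> 0" unfolding C_def by simp
  have main: "\<forall>(u::real \<Rightarrow> real) (u'::real \<Rightarrow> real) (T::real).
     (\<forall>t\<le>T. (u has_real_derivative u' t) (at t within {..T})) \<longrightarrow>
     (\<forall>t\<le>T. u' t = - \<gamma> * u t - \<kappa>1 * u (t - a1 - c * u t) - \<kappa>2 * u (t - a2 - c * u t)) \<longrightarrow>
     (\<forall>t\<le>T. \<bar>u t\<bar> \<le> \<delta>) \<longrightarrow>
     (\<forall>t\<le>T.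
        \<bar>u' t -
          ( L u t
          + (\<Sum>i\<in>{1::nat,2}. (if i = 1 then \<kappa>1 else \<kappa>2) * c * u t
                 * L u (t - (if i = 1 then a1 else a2)))
          + (\<Sum>i\<in>{1::nat,2}. \<Sum>j\<in>{1::nat,2}.
                 (if i = 1 then \<kappa>1 else \<kappa>2) * (if j = 1 then \<kappa>1 else \<kappa>2) * c^2
                 * u t * u (t - (if i = 1 then a1 else a2))
                 * L u (t - (if i = 1 then a1 else a2) - (if j = 1 then a1 else a2)))
          - (1/2) * (c * u t)^2 * (\<Sum>i\<in>{1::nat,2}. (if i = 1 then \<kappa>1 else \<kappa>2)
                 * L (L u) (t - (if i = 1 then a1 else a2)))
          )\<bar> \<le> C * (norm5 a2 u t)^4)"
  proof (intro allI impI)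
    fix u u' :: "real \<Rightarrow> real" and T t :: real
    assume der: "\<forall>t\<le>T. (u has_real_derivative u' t) (at t within {..T})"
      and eq: "\<forall>t\<le>T. u' t = - \<gamma> * u t - \<kappa>1 * u (t - a1 - c * u t) - \<kappa>2 * u (t - a2 - c * u t)"
      and bnd: "\<forall>t\<le>T. \<bar>u t\<bar> \<le> \<delta>" and tT: "t \<le> T"
    define N where "N = norm5 a2 u t"
    have bdd: "bdd_above ((\<lambda>\<theta>. \<bar>u (t + \<theta>)\<bar>) ` {-5 * a2..0})"
      by (rule bdd_aboveI[of _ \<delta>]) (use bnd tT in auto)
    have Nb: "\<bar>u x\<bar> \<le> N" if "t - 5 * a2 \<le> x" "x \<le> t" for x
    proof -
      have "\<bar>u (t + (x - t))\<bar> \<le> N" unfolding N_def norm5_def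
        by (rule cSUP_upper[OF _ bdd]) (use that in auto)
      then show ?thesis by simp
    qed
    have Nd: "N \<le> \<delta>" unfolding N_def norm5_def
      by (rule cSUP_least) (use assms bnd tT in auto)
    have "\<bar>u' t -
          ( L u t
          + (\<Sum>i\<in>{1::nat,2}. (if i = 1 then \<kappa>1 else \<kappa>2) * c * u t
                 * L u (t - (if i = 1 then a1 else a2)))
          + (\<Sum>i\<in>{1::nat,2}. \<Sum>j\<in>{1::nat,2}.
                 (if i = 1 then \<kappa>1 else \<kappa>2) * (if j = 1 then \<kappa>1 else \<kappa>2) * c^2
                 * u t * u (t - (if i = 1 then a1 else a2))
                 * L u (t - (if i = 1 then a1 else a2) - (if j = 1 then a1 else a2)))
          - (1/2) * (c * u t)^2 * (\<Sum>i\<in>{1::nat,2}. (if i = 1 then \<kappa>1 else \<kappa>2)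
                 * L (L u) (t - (if i = 1 then a1 else a2)))
          )\<bar> \<le> ((\<kappa>1 + \<kappa>2) * CG \<gamma> \<kappa>1 \<kappa>2 c \<delta>) * N^4"
      unfolding L_def
      by (rule final) (use assms d0 dsm der eq bnd tT Nb Nd in auto)
    also have "\<dots> \<le> C * N^4" unfolding C_def by (rule mult_right_mono) auto
    finally show "\<bar>u' t -
          ( L u t
          + (\<Sum>i\<in>{1::nat,2}. (if i = 1 then \<kappa>1 else \<kappa>2) * c * u t
                 * L u (t - (if i = 1 then a1 else a2)))
          + (\<Sum>i\<in>{1::nat,2}. \<Sum>j\<in>{1::nat,2}.
                 (if i = 1 then \<kappa>1 else \<kappa>2) * (if j = 1 then \<kappa>1 else \<kappa>2) * c^2
                 * u t * u (t - (if i = 1 then a1 else a2))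
                 * L u (t - (if i = 1 then a1 else a2) - (if j = 1 then a1 else a2)))
          - (1/2) * (c * u t)^2 * (\<Sum>i\<in>{1::nat,2}. (if i = 1 then \<kappa>1 else \<kappa>2)
                 * L (L u) (t - (if i = 1 then a1 else a2)))
          )\<bar> \<le> C * (norm5 a2 u t)^4" unfolding N_def .
  qed
  show ?thesis using main d0 C0 by blast
qed

end
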